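(* Let $\xi=(\xi(x))_{x\in\mathbb{Z}}$ be i.i.d. random variables with values in $(-\infty,0]$ such that $\langle\log(-\xi(0)\vee1)\rangle=\infty$. Then for all $b\ge1$, \[ \lim_{n\to\infty}\frac{1}{G^{-1}(1/n)}\sum_{x=1}^{\lfloor 2n\log n\rfloor}\log\Bigl(\frac{-\xi(x)\vee b}{b}\Bigr)=\infty\qquad\text{Prob-almost surely.} \]
   Context: Prob and $\langle\cdot\rangle$ denote the law and expectation of $\xi$. $G(\ell)=-\log\langle(-\xi(0)\vee1)^{-1/\ell}\rangle$ for $\ell>0$; $G$ is positive, continuous, strictly decreasing with $G(\ell)\to0$ as $\ell\to\infty$, and $G^{-1}$ denotes its inverse function (defined at $1/n$ for all sufficiently large $n$). *)

theory Defs
  imports "HOL-Probability.Probability"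
begin

definition Gfun :: "'a measure \<Rightarrow> ('a \<Rightarrow> real) \<Rightarrow> real \<Rightarrow> real" where
  "Gfun M X l = - ln (\<integral>w. (max (- X w) 1) powr (- 1 / l) \<partial>M)"

definition Ginv :: "'a measure \<Rightarrow> ('a \<Rightarrow> real) \<Rightarrow> real \<Rightarrow> real" where
  "Ginv M X y = (THE l. 0 < l \<and> Gfun M X l = y)"

end

theory Submission
  imports Defs "HOL-Analysis.Summation_Tests"
begin


locale lp = prob_space M for M :: "'a measure" +
  fixes X :: "'a \<Rightarrow> real"
  assumes Xm[measurable]: "X \<in> borel_measurable M"
    and logmom: "(\<integral>\<^sup>+ w. ennreal (ln (max (- X w) 1)) \<partial>M) = \<infinity>"
begin

definition L where "L w = ln (max (- X w) 1)"
definition phi where "phi l = (\<integral>w. exp (- L w / l) \<partial>M)"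

lemma L_meas[measurable]: "L \<in> borel_measurable M" unfolding L_def by measurable
lemma L_nonneg: "L w \<ge> 0" unfolding L_def by simp

lemma Gfun_eq: "Gfun M X l = - ln (phi l)"
proof -
  have "(\<lambda>w. (max (- X w) 1) powr (- 1 / l)) = (\<lambda>w. exp (- L w / l))"
    by (rule ext) (simp add: powr_def L_def)
  then show ?thesis unfolding Gfun_def phi_def by simp
qed

lemma int_exp: "integrable M (\<lambda>w. exp (- L w / l))" if "l > 0" for l
proof (rule integrable_const_bound[where B=1])
  show "AE x in M. norm (exp (- L x / l)) \<le> 1"
    using that L_nonneg by (auto simp: divide_nonneg_pos)
qed measurable

lemma phi_pos: "l > 0 \<Longrightarrow> phi l > 0"
  unfolding phi_def
  using integral_less_AE_space[of "\<lambda>_. 0" "\<lambda>w. exp (- L w / l)"] int_exp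
  by (simp add: emeasure_space_1)

lemma not_AE_L0: "\<not> (AE w in M. L w = 0)"
proof
  assume "AE w in M. L w = 0"
  then have "(\<integral>\<^sup>+ w. ennreal (L w) \<partial>M) = (\<integral>\<^sup>+ w. 0 \<partial>M)"
    by (intro nn_integral_cong_AE) auto
  then show False using logmom unfolding L_def by simp
qed

lemma phi_strict: assumes "0 < l1" "l1 < l2" shows "phi l1 < phi l2"
proof -
  have le: "exp (- L w / l1) \<le> exp (- L w / l2)" for w
    using assms L_nonneg[of w] by (simp add: frac_le divide_left_mono)
  have "phi l1 \<le> phi l2" unfolding phi_def
    using le assms int_exp by (intro integral_mono) auto
  moreover have "phi l1 \<noteq> phi l2"
  proof
    assume eq: "phi l1 = phi l2"
    have "(\<integral>w. exp (- L w / l2) - exp (- L w / l1) \<partial>M) = 0"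
      using eq assms int_exp unfolding phi_def by simp
    then have "AE w in M. exp (- L w / l2) - exp (- L w / l1) = 0"
      using le assms int_exp by (subst integral_nonneg_eq_0_iff_AE[symmetric]) auto
    then have "AE w in M. L w = 0"
    proof eventually_elim
      fix w assume "exp (- L w / l2) - exp (- L w / l1) = 0"
      then have "L w / l2 = L w / l1" by simp
      then show "L w = 0" using assms by (auto simp: field_simps)
    qed
    then show False using not_AE_L0 by simp
  qed
  ultimately show ?thesis by simp
qed

lemma phi_lt1: "l > 0 \<Longrightarrow> phi l < 1"
proof -
  assume l: "l > 0"
  have "phi l < phi (l+1)" using phi_strict l by simp
  moreover have "phi (l+1) \<le> 1" unfolding phi_def
    using l L_nonneg int_exp[of "l+1"] by (intro prob_space.integral_le_const prob_space_axioms) (auto simp: divide_nonneg_pos)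
  ultimately show ?thesis by simp
qed


lemma phi_cont: "continuous_on {0<..} phi"
  unfolding continuous_on_def
proof
  fix l :: real assume l: "l \<in> {0<..}"
  show "(phi \<longlongrightarrow> phi l) (at l within {0<..})"
    unfolding tendsto_at_iff_sequentially
  proof (intro allI impI)
    fix S :: "nat \<Rightarrow> real" assume S: "\<forall>i. S i \<in> {0<..} - {l}" and lim: "S \<longlonglongrightarrow> l"
    show "(phi \<circ> S) \<longlonglongrightarrow> phi l" unfolding comp_def phi_def
    proof (rule integral_dominated_convergence[where w="\<lambda>_. 1"])
      show "AE x in M. (\<lambda>i. exp (- L x / S i)) \<longlonglongrightarrow> exp (- L x / l)"
        using l lim by (auto intro!: tendsto_intros)
      show "AE x in M. norm (exp (- L x / S i)) \<le> 1" for i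
        using S L_nonneg by (auto simp: divide_nonneg_pos)
    qed auto
  qed
qed

lemma phi_to1: "(\<lambda>m::nat. phi (real m)) \<longlonglongrightarrow> 1"
proof -
  have "(\<lambda>m::nat. phi (real m)) \<longlonglongrightarrow> (\<integral>w. 1 \<partial>M)" unfolding phi_def
  proof (rule integral_dominated_convergence[where w="\<lambda>_. 1"])
    show "AE x in M. (\<lambda>i::nat. exp (- L x / real i)) \<longlonglongrightarrow> 1"
    proof (intro AE_I2)
      fix x
      have "(\<lambda>i::nat. L x / real i) \<longlonglongrightarrow> 0"
        by (intro tendsto_divide_0[OF tendsto_const] filterlim_at_top_imp_at_infinity[OF filterlim_real_sequentially])
      from tendsto_exp[OF tendsto_minus[OF this]] show "(\<lambda>i::nat. exp (- L x / real i)) \<longlonglongrightarrow> 1" by simp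
    qed
    show "AE x in M. norm (exp (- L x / real i)) \<le> 1" for i
      using L_nonneg by (auto simp: divide_nonneg_nonneg)
  qed auto
  then show ?thesis by (simp add: prob_space)
qed

lemma exp_lower: "(x::real) \<ge> 0 \<Longrightarrow> 1 - exp (- x) \<ge> x / (1 + x)"
proof -
  assume x: "x \<ge> 0"
  have "1 + x \<le> exp x" by (rule exp_ge_add_one_self)
  then have "exp (- x) \<le> 1 / (1 + x)" using x
    by (simp add: exp_minus field_simps)
  then show ?thesis using x by (simp add: field_simps)
qed

lemma big: "\<exists>T>0. \<forall>l\<ge>T. l * (1 - phi l) \<ge> A"
proof -
  define f where "f n w = ennreal (min (L w) (real n))" for n w
  have "(\<lambda>n. integral\<^sup>N M (f n)) \<longlonglongrightarrow> integral\<^sup>N M (\<lambda>w. ennreal (L w))"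
  proof (rule nn_integral_LIMSEQ)
    show "incseq f" unfolding f_def incseq_def le_fun_def
      by (auto intro!: ennreal_leI)
    show "f i \<in> borel_measurable M" for i unfolding f_def by measurable
    show "(\<lambda>i. f i x) \<longlonglongrightarrow> ennreal (L x)" for x
    proof (rule tendsto_eventually)
      show "\<forall>\<^sub>F i in sequentially. f i x = ennreal (L x)"
        using eventually_ge_at_top[of "nat \<lceil>L x\<rceil>"]
      proof eventually_elim
        fix i assume i: "nat \<lceil>L x\<rceil> \<le> i"
        have "L x \<le> real (nat \<lceil>L x\<rceil>)" using L_nonneg[of x] by linarith
        also have "\<dots> \<le> real i" using i by simp
        finally show "f i x = ennreal (L x)" by (simp add: f_def)
      qed
    qed
  qed
  then have "(\<lambda>n. integral\<^sup>N M (f n)) \<longlonglongrightarrow> \<infinity>" using logmom unfolding L_def by simp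
  from order_tendstoD(1)[OF this, of "ennreal (2 * \<bar>A\<bar>)"]
  obtain n where n: "ennreal (2 * \<bar>A\<bar>) < integral\<^sup>N M (f n)"
    by (auto simp: eventually_sequentially)
  have intm: "integrable M (\<lambda>w. min (L w) (real n))"
    by (rule integrable_const_bound[where B="real n"]) (auto simp: L_nonneg)
  have "integral\<^sup>N M (f n) = ennreal (\<integral>w. min (L w) (real n) \<partial>M)"
    unfolding f_def using intm by (intro nn_integral_eq_integral) (auto simp: L_nonneg)
  with n have I: "2 * \<bar>A\<bar> < (\<integral>w. min (L w) (real n) \<partial>M)"
    by (simp add: ennreal_less_iff)
  define T where "T = real n + 1"
  show ?thesis
  proof (intro exI conjI allI impI)
    show "T > 0" unfolding T_def by simp
    fix l assume lT: "T \<le> l"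
    then have l0: "l > 0" unfolding T_def by linarith
    have pw: "l * (1 - exp (- L w / l)) \<ge> min (L w) (real n) / 2" for w
    proof -
      define m where "m = min (L w) (real n)"
      have m0: "0 \<le> m" "m \<le> L w" "m \<le> l" using L_nonneg[of w] lT unfolding m_def T_def by auto
      have "exp (- L w / l) \<le> exp (- m / l)" using m0 l0 by (simp add: divide_right_mono)
      then have "l * (1 - exp (- L w / l)) \<ge> l * (1 - exp (- (m / l)))" using l0 by simp
      moreover have "1 - exp (- (m / l)) \<ge> (m / l) / (1 + m / l)"
        using m0 l0 by (intro exp_lower) simp
      moreover have "l * ((m / l) / (1 + m / l)) = m * l / (l + m)" using l0 m0
        by (simp add: field_simps)
      moreover have "m * l / (l + m) \<ge> m / 2" using l0 m0
        by (simp add: field_simps) (metis mult_left_mono mult.commute)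
      ultimately show ?thesis unfolding m_def
        by (smt (verit, best) l0 mult_left_mono)
    qed
    have "l * (1 - phi l) = (\<integral>w. l * (1 - exp (- L w / l)) \<partial>M)"
      unfolding phi_def using int_exp[OF l0] by (simp add: prob_space right_diff_distrib)
    also have "\<dots> \<ge> (\<integral>w. min (L w) (real n) / 2 \<partial>M)"
      using pw int_exp[OF l0] intm by (intro integral_mono) auto
    finally show "l * (1 - phi l) \<ge> A" using I by simp
  qed
qed


lemma exp_n_to1: "(\<lambda>n::nat. exp (- 1 / real n)) \<longlonglongrightarrow> 1"
proof -
  have "(\<lambda>n::nat. 1 / real n) \<longlonglongrightarrow> 0"
    by (intro tendsto_divide_0[OF tendsto_const] filterlim_at_top_imp_at_infinity[OF filterlim_real_sequentially])
  from tendsto_exp[OF tendsto_minus[OF this]] show ?thesis by simp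
qed

lemma ev_above: "p < 1 \<Longrightarrow> eventually (\<lambda>n::nat. p < exp (- 1 / real n)) sequentially"
  using order_tendstoD(1)[OF exp_n_to1] by simp

lemma ginv_char:
  assumes n: "n > 0" and p: "phi 1 < exp (- 1 / real n)"
  shows "0 < Ginv M X (1 / real n) \<and> phi (Ginv M X (1 / real n)) = exp (- 1 / real n)"
proof -
  define y where "y = exp (- 1 / real n)"
  have y1: "y < 1" unfolding y_def using n by simp
  obtain m :: nat where m: "y < phi (real m)" "m \<ge> 1"
    using eventually_conj[OF order_tendstoD(1)[OF phi_to1 y1] eventually_ge_at_top[of "1::nat"]]
    by (auto simp: eventually_sequentially)
  have "continuous_on {1..real m} phi" by (rule continuous_on_subset[OF phi_cont]) auto
  then obtain l where l: "1 \<le> l" "l \<le> real m" "phi l = y"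
    using IVT'[of phi 1 y "real m"] p m unfolding y_def by fastforce
  have uniq: "l' = l" if "0 < l'" "Gfun M X l' = 1 / real n" for l'
  proof -
    have "ln (phi l') = - 1 / real n" using that Gfun_eq by simp
    then have "phi l' = y" unfolding y_def using phi_pos[OF that(1)]
      by (metis exp_ln)
    then show "l' = l" using phi_strict[of l l'] phi_strict[of l' l] l that(1)
      by (cases l l' rule: linorder_cases) auto
  qed
  have "Gfun M X l = 1 / real n" using l Gfun_eq unfolding y_def by simp
  then have "Ginv M X (1 / real n) = l" unfolding Ginv_def
    using l uniq by (intro the_equality) auto
  then show ?thesis using l unfolding y_def by simp
qed

lemma ginv_ev: "eventually (\<lambda>n::nat. 0 < Ginv M X (1 / real n) \<and> phi (Ginv M X (1 / real n)) = exp (- 1 / real n)) sequentially"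
proof -
  have "phi 1 < 1" using phi_lt1[of 1] by simp
  from eventually_conj[OF ev_above[OF this] eventually_gt_at_top[of "0::nat"]]
  show ?thesis by eventually_elim (rule ginv_char, auto)
qed

lemma ginv_big: "eventually (\<lambda>n::nat. Ginv M X (1 / real n) \<ge> A * real n) sequentially"
proof -
  obtain T where T: "T > 0" "\<forall>l\<ge>T. l * (1 - phi l) \<ge> max A 0" using big by blast
  show ?thesis
    using eventually_conj[OF ev_above[OF phi_lt1[OF T(1)]] eventually_conj[OF ginv_ev eventually_gt_at_top[of "0::nat"]]]
  proof eventually_elim
    fix n :: nat
    assume a: "phi T < exp (- 1 / real n) \<and> (0 < Ginv M X (1 / real n) \<and> phi (Ginv M X (1 / real n)) = exp (- 1 / real n)) \<and> 0 < n"
    define l where "l = Ginv M X (1 / real n)"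
    have l0: "0 < l" and pl: "phi l = exp (- 1 / real n)" and n0: "0 < n" using a unfolding l_def by auto
    have "T \<le> l"
    proof (rule ccontr)
      assume "\<not> T \<le> l"
      then have "phi l < phi T" using phi_strict[OF l0] by simp
      then show False using a pl by simp
    qed
    then have "l * (1 - phi l) \<ge> max A 0" using T by blast
    then have "l * (1 - exp (- 1 / real n)) \<ge> max A 0" using pl by simp
    moreover have "1 - exp (- 1 / real n) \<le> 1 / real n"
      using exp_ge_add_one_self[of "- 1 / real n"] by simp
    ultimately have "l * (1 / real n) \<ge> max A 0"
      using l0 by (smt (verit) mult_left_mono)
    then have "max A 0 * real n \<le> l * (1 / real n) * real n" by (rule mult_right_mono) simp
    then have "l \<ge> max A 0 * real n" using n0 by simp
    moreover have "max A 0 * real n \<ge> A * real n" by (simp add: mult_right_mono)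
    ultimately show "Ginv M X (1 / real n) \<ge> A * real n" unfolding l_def by linarith
  qed
qed

end


lemma ZL_bounds:
  fixes y b :: real assumes b: "b \<ge> 1"
  shows "0 \<le> ln (max y b / b)" "ln (max y b / b) \<le> ln (max y 1)"
    "ln (max y 1) - ln (max y b / b) \<le> ln b"
proof -
  have b0: "b > 0" using b by simp
  show "0 \<le> ln (max y b / b)" using b0 by simp
  have "max y b / b \<le> max y 1"
  proof (cases "y \<ge> b")
    case True
    then have "y / b \<le> y" using b by (simp add: divide_le_eq)
    then show ?thesis using True by simp
  next
    case False then show ?thesis using b0 by simp
  qed
  then show "ln (max y b / b) \<le> ln (max y 1)" using b0 by simp
  have "max y 1 \<le> max y b" using b by simp
  then have "ln (max y 1) \<le> ln (max y b)" by simp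
  moreover have "ln (max y b / b) = ln (max y b) - ln b" using b0 by (simp add: ln_div)
  ultimately show "ln (max y 1) - ln (max y b / b) \<le> ln b" by simp
qed

locale ml = lp M "\<xi> 0" for M :: "'a measure" and \<xi> :: "int \<Rightarrow> 'a \<Rightarrow> real" +
  fixes b :: real
  assumes meas[measurable]: "\<And>x. \<xi> x \<in> borel_measurable M"
    and indep: "indep_vars (\<lambda>_. borel) \<xi> UNIV"
    and ident: "\<And>x. distr M borel (\<xi> x) = distr M borel (\<xi> 0)"
    and b: "b \<ge> 1"
begin

definition Z where "Z x w = ln (max (- \<xi> x w) b / b)"
definition N :: "nat \<Rightarrow> int" where "N n = \<lfloor>2 * real n * ln (real n)\<rfloor>"
definition S where "S n w = (\<Sum>x\<in>{1..N n}. Z x w)"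
definition psi where "psi l = (\<integral>w. exp (- Z 0 w / l) \<partial>M)"

lemma Z_meas[measurable]: "Z x \<in> borel_measurable M" unfolding Z_def by measurable
lemma S_meas[measurable]: "S n \<in> borel_measurable M" unfolding S_def by measurable
lemma Z_nonneg: "Z x w \<ge> 0" unfolding Z_def using ZL_bounds(1)[OF b] by simp

lemma intZ: "l > 0 \<Longrightarrow> integrable M (\<lambda>w. exp (- Z x w / l))"
  by (rule integrable_const_bound[where B=1]) (auto simp: Z_nonneg divide_nonneg_pos)

lemma psi_ident: "(\<integral>w. exp (- Z x w / l) \<partial>M) = psi l"
proof -
  define h where "h v = exp (- ln (max (- v) b / b) / l)" for v :: real
  have hm: "h \<in> borel_measurable borel" unfolding h_def by measurable
  have "(\<integral>w. exp (- Z x w / l) \<partial>M) = integral\<^sup>L (distr M borel (\<xi> x)) h"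
    by (subst integral_distr[OF _ hm]) (auto simp: h_def Z_def)
  also have "\<dots> = integral\<^sup>L (distr M borel (\<xi> 0)) h" by (subst ident[of x]) (rule refl)
  also have "\<dots> = psi l"
    by (subst integral_distr[OF _ hm]) (auto simp: h_def Z_def psi_def)
  finally show ?thesis .
qed

lemma chernoff:
  assumes l: "l > 0"
  shows "prob {w\<in>space M. S n w \<le> K * l} \<le> exp K * psi l ^ nat (N n)"
proof -
  define I where "I = {1..N n}"
  have eqset: "{w\<in>space M. S n w \<le> K * l} = {w\<in>space M. exp (- K) \<le> exp (- S n w / l)}"
    using l by (auto simp: field_simps)
  have prodeq: "exp (- S n w / l) = (\<Prod>x\<in>I. exp (- Z x w / l))" for w
  proof -
    have "- S n w / l = (\<Sum>x\<in>I. - Z x w / l)"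
      unfolding S_def I_def by (simp add: sum_divide_distrib sum_negf)
    then show ?thesis by (simp add: exp_sum I_def)
  qed
  have ind: "indep_vars (\<lambda>_. borel) (\<lambda>x w. exp (- Z x w / l)) I"
  proof -
    have "indep_vars (\<lambda>_. borel) (\<lambda>x w. (\<lambda>v. exp (- ln (max (- v) b / b) / l)) (\<xi> x w)) UNIV"
      by (rule indep_vars_compose2[OF indep]) measurable
    then show ?thesis unfolding Z_def by (rule indep_vars_subset) simp
  qed
  have "(\<integral>w. exp (- S n w / l) \<partial>M) = (\<Prod>x\<in>I. \<integral>w. exp (- Z x w / l) \<partial>M)"
    unfolding prodeq
    by (rule indep_vars_lebesgue_integral) (use ind intZ[OF l] in \<open>auto simp: I_def\<close>)
  also have "\<dots> = psi l ^ nat (N n)" by (simp add: psi_ident[simplified] I_def)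
  finally have E: "(\<integral>w. exp (- S n w / l) \<partial>M) = psi l ^ nat (N n)" .
  have intS: "integrable M (\<lambda>w. exp (- S n w / l))"
    unfolding prodeq
    by (rule indep_vars_integrable) (use ind intZ[OF l] in \<open>auto simp: I_def\<close>)
  have "prob {w\<in>space M. exp (- K) \<le> exp (- S n w / l)} \<le> (\<integral>w. exp (- S n w / l) \<partial>M) / exp (- K)"
    by (rule integral_Markov_inequality_measure[OF intS, of "space M"]) auto
  then show ?thesis using eqset E by (simp add: exp_minus divide_inverse mult.commute)
qed

lemma psi_le:
  assumes l: "l > 0"
  shows "psi l \<le> phi l + ln b / l"
proof -
  have pw: "exp (- Z 0 w / l) \<le> exp (- L w / l) + ln b / l" for w
  proof -
    have z: "0 \<le> Z 0 w" "Z 0 w \<le> L w" "L w - Z 0 w \<le> ln b"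
      using ZL_bounds[OF b, of "- \<xi> 0 w"] unfolding Z_def L_def by auto
    define a where "a = Z 0 w / l"
    define d where "d = (L w - Z 0 w) / l"
    have a0: "a \<ge> 0" "d \<ge> 0" using z l unfolding a_def d_def by auto
    have "L w / l = a + d" unfolding a_def d_def using l by (simp add: field_simps)
    then have "exp (- L w / l) = exp (- a) * exp (- d)" by (simp add: exp_add[symmetric])
    moreover have "1 - exp (- d) \<le> d" using exp_ge_add_one_self[of "- d"] by simp
    moreover have "exp (- a) \<le> 1" using a0 by simp
    moreover have "d \<le> ln b / l" unfolding d_def using z l by (simp add: divide_right_mono)
    moreover have "exp (- a) * (1 - exp (- d)) \<le> 1 * d"
      using a0 \<open>1 - exp (- d) \<le> d\<close> \<open>exp (- a) \<le> 1\<close>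
      by (intro mult_mono) auto
    ultimately have "exp (- a) \<le> exp (- L w / l) + ln b / l" by (simp add: algebra_simps)
    then show ?thesis unfolding a_def by simp
  qed
  have "psi l \<le> (\<integral>w. exp (- L w / l) + ln b / l \<partial>M)"
    unfolding psi_def using pw int_exp[OF l] intZ[OF l] by (intro integral_mono) auto
  also have "\<dots> = phi l + ln b / l" unfolding phi_def using int_exp[OF l] by (simp add: prob_space)
  finally show ?thesis .
qed

lemma psi_nonneg: "psi l \<ge> 0" unfolding psi_def by simp

end


context ml begin

definition g where "g n = Ginv M (\<xi> 0) (1 / real n)"

lemma ineq1: "(n::real) \<ge> 10 \<Longrightarrow> n / (n + 1) + 1 / (5 * n) \<le> 1 - (7/10) / n"
proof -
  assume n: "n \<ge> 10"
  have e1: "n / (n + 1) = 1 - 1 / (n + 1)" using n by (simp add: field_simps)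
  have e2: "1 / (n + 1) \<ge> 9 / (10 * n)" using n by (simp add: field_simps)
  have e3: "1 / (5 * n) + (7/10) / n = 9 / (10 * n)" using n by (simp add: field_simps)
  show ?thesis using e1 e2 e3 by linarith
qed

lemma bound_ev:
  "eventually (\<lambda>n. prob {w\<in>space M. S n w \<le> K * g n} \<le> exp K * exp 1 * real n powr (-7/5)) sequentially"
  using eventually_conj[OF ginv_ev eventually_conj[OF ginv_big[of "5 * ln b + 1"] eventually_ge_at_top[of "10::nat"]]]
proof eventually_elim
  fix n :: nat
  assume a: "(0 < Ginv M (\<xi> 0) (1 / real n) \<and> phi (Ginv M (\<xi> 0) (1 / real n)) = exp (- 1 / real n)) \<and>
         (5 * ln b + 1) * real n \<le> Ginv M (\<xi> 0) (1 / real n) \<and> 10 \<le> n"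
  define l where "l = g n"
  define c where "c = ln b"
  have c0: "c \<ge> 0" unfolding c_def using b by simp
  have l0: "l > 0" and pl: "phi l = exp (- 1 / real n)" and lb: "(5 * c + 1) * real n \<le> l" and n10: "10 \<le> n"
    using a unfolding l_def g_def c_def by auto
  have rn: "real n \<ge> 10" using n10 by simp
  have h1: "psi l \<le> exp (- 1 / real n) + c / l" using psi_le[OF l0] pl unfolding c_def by simp
  have "1 + 1 / real n \<le> exp (1 / real n)" by (rule exp_ge_add_one_self)
  then have "exp (- 1 / real n) \<le> 1 / (1 + 1 / real n)"
    using rn by (simp add: exp_minus divide_simps) (metis mult.commute)
  also have "\<dots> = real n / (real n + 1)" using rn by (simp add: field_simps)
  finally have h2: "exp (- 1 / real n) \<le> real n / (real n + 1)" .
  have "c / l \<le> c / ((5 * c + 1) * real n)"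
    using c0 lb rn l0 by (intro divide_left_mono) (auto intro!: mult_pos_pos)
  also have "\<dots> \<le> 1 / (5 * real n)"
  proof -
    have h: "0 \<le> 5 * c * real n" using c0 by simp
    show ?thesis using c0 rn by (simp add: divide_simps ring_distribs) (use h rn in linarith)
  qed
  finally have h3: "c / l \<le> 1 / (5 * real n)" .
  define q where "q = 1 - (7/10) / real n"
  have q: "psi l \<le> q" using h1 h2 h3 ineq1[OF rn] unfolding q_def by linarith
  have q0: "0 \<le> q" unfolding q_def using rn by (simp add: field_simps)
  define k where "k = nat (N n)"
  have lnn: "ln (real n) \<ge> 0" using rn by simp
  have Nn: "real_of_int (N n) \<ge> 2 * real n * ln (real n) - 1" unfolding N_def by linarith
  have "real_of_int (N n) \<ge> 0" unfolding N_def using lnn rn by simp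
  then have kN: "real k \<ge> 2 * real n * ln (real n) - 1" using Nn unfolding k_def by simp
  have "psi l ^ k \<le> q ^ k" using q psi_nonneg by (intro power_mono) auto
  also have "\<dots> \<le> exp (- (7/10) / real n) ^ k"
    using q0 exp_ge_add_one_self[of "- (7/10) / real n"] unfolding q_def
    by (intro power_mono) auto
  also have "\<dots> = exp (real k * (- (7/10) / real n))" by (rule exp_of_nat_mult[symmetric])
  also have "\<dots> \<le> exp (1 + (-7/5) * ln (real n))"
  proof -
    have "real k * (- (7/10) / real n) \<le> (2 * real n * ln (real n) - 1) * (- (7/10) / real n)"
      using kN rn by (intro mult_right_mono_neg) auto
    also have "\<dots> = (-7/5) * ln (real n) + (7/10) / real n" using rn by (simp add: field_simps)
    also have "\<dots> \<le> 1 + (-7/5) * ln (real n)" using rn by (simp add: field_simps)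
    finally show ?thesis by simp
  qed
  also have "\<dots> = exp 1 * exp ((-7/5) * ln (real n))" by (rule exp_add)
  also have "\<dots> = exp 1 * real n powr (-7/5)" using rn by (simp add: powr_def)
  finally have P: "psi l ^ k \<le> exp 1 * real n powr (-7/5)" .
  have "prob {w\<in>space M. S n w \<le> K * l} \<le> exp K * psi l ^ k" unfolding k_def by (rule chernoff[OF l0])
  also have "\<dots> \<le> exp K * (exp 1 * real n powr (-7/5))" using P by simp
  finally show "prob {w\<in>space M. S n w \<le> K * g n} \<le> exp K * exp 1 * real n powr (-7/5)"
    unfolding l_def by (simp add: mult.assoc)
qed


lemma final: "AE w in M. filterlim (\<lambda>n. S n w / g n) at_top sequentially"
proof -
  define A where "A K n = {w\<in>space M. S n w \<le> real K * g n}" for K :: nat and n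
  have "AE w in M. eventually (\<lambda>n. w \<in> space M - A K n) sequentially" for K
  proof (rule borel_cantelli_AE1)
    show "A K n \<in> sets M" for n unfolding A_def by measurable
    show "emeasure M (A K n) < \<infinity>" for n using emeasure_finite[of "A K n"] by (simp only: less_top[symmetric] infinity_ennreal_def) simp
    have sg: "summable (\<lambda>n::nat. exp (real K) * exp 1 * real n powr (-7/5))"
      by (intro summable_mult) (simp add: summable_real_powr_iff)
    show "summable (\<lambda>n. measure M (A K n))"
    proof (rule summable_comparison_test_ev[OF _ sg])
      show "\<forall>\<^sub>F n in sequentially. norm (measure M (A K n)) \<le> exp (real K) * exp 1 * real n powr (-7/5)"
        using bound_ev[of "real K"] unfolding A_def by (rule eventually_mono) simp
    qed
  qed
  then have "AE w in M. \<forall>K. eventually (\<lambda>n. w \<in> space M - A K n) sequentially"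
    by (simp add: AE_all_countable)
  then show ?thesis
  proof eventually_elim
    fix w assume w: "\<forall>K. eventually (\<lambda>n. w \<in> space M - A K n) sequentially"
    show "filterlim (\<lambda>n. S n w / g n) at_top sequentially"
      unfolding filterlim_at_top
    proof
      fix Zr :: real
      define K where "K = nat \<lceil>Zr\<rceil>"
      have "eventually (\<lambda>n. 0 < g n) sequentially"
        using ginv_ev unfolding g_def by (rule eventually_mono) simp
      with w[rule_format, of K] show "eventually (\<lambda>n. Zr \<le> S n w / g n) sequentially"
      proof eventually_elim
        fix n assume a: "w \<in> space M - A K n" "0 < g n"
        then have "real K * g n < S n w" unfolding A_def by auto
        then have "real K < S n w / g n" using a(2) by (simp add: field_simps)
        moreover have "Zr \<le> real K" unfolding K_def by linarith
        ultimately show "Zr \<le> S n w / g n" by simp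
      qed
    qed
  qed
qed

end

theorem lemma3p3:
  fixes M :: "'a measure" and \<xi> :: "int \<Rightarrow> 'a \<Rightarrow> real" and b :: real
  assumes "prob_space M"
    and meas: "\<And>x. \<xi> x \<in> borel_measurable M"
    and indep: "prob_space.indep_vars M (\<lambda>_. borel) \<xi> UNIV"
    and ident: "\<And>x. distr M borel (\<xi> x) = distr M borel (\<xi> 0)"
    and nonpos: "\<And>x w. w \<in> space M \<Longrightarrow> \<xi> x w \<le> 0"
    and logmom: "(\<integral>\<^sup>+ w. ennreal (ln (max (- \<xi> 0 w) 1)) \<partial>M) = \<infinity>"
    and b: "b \<ge> 1"
  shows "AE w in M. filterlim
           (\<lambda>n::nat. (\<Sum>x\<in>{1..\<lfloor>2 * real n * ln (real n)\<rfloor>}. ln (max (- \<xi> x w) b / b))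
                       / Ginv M (\<xi> 0) (1 / real n))
           at_top sequentially"
proof -
  interpret ml M \<xi> b
    by (intro ml.intro lp.intro ml_axioms.intro lp_axioms.intro) (use assms in auto)
  from final show ?thesis unfolding S_def Z_def g_def N_def by simp
qed

end
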